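(* A binary matrix $A$ has at most one base that spans all other bases of $A$, both with respect to the binary setting and with respect to the boolean setting.
   Context: A set $X$ of $\{0,1\}$-vectors spans a vector $y$ in the binary (resp. boolean) sense if $y=\sum_{x\in X}c_xx$ with $c_x\in\{0,1\}$ using ordinary (resp. boolean, $1+1=1$) addition; $X$ spans a set $Y$ if it spans each vector of $Y$. A binary (resp. boolean) base of an $n\times m$ binary matrix $A$ is a set of $\{0,1\}$ column vectors of length $n$ spanning every column of $A$ in the corresponding sense, of minimum cardinality among such spanning sets. *)

theory Defs
  imports Main
begin

definition binvecs :: "nat \<Rightarrow> (nat \<Rightarrow> nat) set" where
  "binvecs n = {v. (\<forall>i<n. v i \<in> {0,1}) \<and> (\<forall>i\<ge>n. v i = 0)}"

(* binary span: y = sum of a subset of X, ordinary (integer) addition *)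
definition bin_spans_vec :: "nat \<Rightarrow> (nat \<Rightarrow> nat) set \<Rightarrow> (nat \<Rightarrow> nat) \<Rightarrow> bool" where
  "bin_spans_vec n X y \<longleftrightarrow> (\<exists>C\<subseteq>X. \<forall>i<n. y i = (\<Sum>x\<in>C. x i))"

definition bool_spans_vec :: "nat \<Rightarrow> (nat \<Rightarrow> nat) set \<Rightarrow> (nat \<Rightarrow> nat) \<Rightarrow> bool" where
  "bool_spans_vec n X y \<longleftrightarrow>
     (\<exists>C\<subseteq>X. \<forall>i<n. y i = (if \<exists>x\<in>C. x i = 1 then 1 else 0))"

definition spans_set ::
  "(nat \<Rightarrow> (nat \<Rightarrow> nat) set \<Rightarrow> (nat \<Rightarrow> nat) \<Rightarrow> bool) \<Rightarrow> nat \<Rightarrow>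
   (nat \<Rightarrow> nat) set \<Rightarrow> (nat \<Rightarrow> nat) set \<Rightarrow> bool" where
  "spans_set sp n X Y \<longleftrightarrow> (\<forall>y\<in>Y. sp n X y)"

definition col :: "nat \<Rightarrow> (nat \<Rightarrow> nat \<Rightarrow> nat) \<Rightarrow> nat \<Rightarrow> nat \<Rightarrow> nat" where
  "col n A j = (\<lambda>i. if i < n then A i j else 0)"

definition columns :: "nat \<Rightarrow> nat \<Rightarrow> (nat \<Rightarrow> nat \<Rightarrow> nat) \<Rightarrow> (nat \<Rightarrow> nat) set" where
  "columns n m A = col n A ` {0..<m}"

definition binary_matrix :: "nat \<Rightarrow> nat \<Rightarrow> (nat \<Rightarrow> nat \<Rightarrow> nat) \<Rightarrow> bool" where
  "binary_matrix n m A \<longleftrightarrow> (\<forall>i<n. \<forall>j<m. A i j \<in> {0,1})"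

definition is_base ::
  "(nat \<Rightarrow> (nat \<Rightarrow> nat) set \<Rightarrow> (nat \<Rightarrow> nat) \<Rightarrow> bool) \<Rightarrow> nat \<Rightarrow> nat \<Rightarrow>
   (nat \<Rightarrow> nat \<Rightarrow> nat) \<Rightarrow> (nat \<Rightarrow> nat) set \<Rightarrow> bool" where
  "is_base sp n m A X \<longleftrightarrow>
     X \<subseteq> binvecs n \<and> spans_set sp n X (columns n m A) \<and>
     (\<forall>Y. Y \<subseteq> binvecs n \<and> spans_set sp n Y (columns n m A) \<longrightarrow> card X \<le> card Y)"

end

theory Submission
  imports Defs
begin

lemma finite_binvecs: "finite (binvecs n)"
proof -
  have 1: "inj_on (\<lambda>v. {i. i < n \<and> v i = 1}) (binvecs n)"
  proof (rule inj_onI)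
    fix v w assume v: "v \<in> binvecs n" and w: "w \<in> binvecs n"
      and eq: "{i. i < n \<and> v i = 1} = {i. i < n \<and> w i = 1}"
    show "v = w"
    proof
      fix i show "v i = w i"
      proof (cases "i < n")
        case True
        then have "v i \<in> {0,1}" "w i \<in> {0,1}" using v w by (auto simp: binvecs_def)
        moreover have "v i = 1 \<longleftrightarrow> w i = 1" using eq True by blast
        ultimately show ?thesis by auto
      next
        case False then show ?thesis using v w by (auto simp: binvecs_def)
      qed
    qed
  qed
  have 2: "(\<lambda>v. {i. i < n \<and> v i = 1}) ` binvecs n \<subseteq> Pow {..<n}" by auto
  show ?thesis by (rule inj_on_finite[OF 1 2]) simp
qed

lemma generic:
  assumes H1: "\<And>X y. sp n X y \<Longrightarrow> X \<subseteq> binvecs n \<Longrightarrow> y \<in> binvecs n \<Longrightarrow>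
                 \<exists>C\<subseteq>X. (\<forall>c\<in>C. \<forall>i<n. c i \<le> y i) \<and> sp n C y"
    and H2: "\<And>B x. is_base sp n m A B \<Longrightarrow> x \<in> B \<Longrightarrow> sp n (B - {x}) x \<Longrightarrow> False"
    and H3: "\<And>X Y y. sp n X y \<Longrightarrow> X \<subseteq> Y \<Longrightarrow> sp n Y y"
    and B1: "is_base sp n m A B1" and B2: "is_base sp n m A B2"
    and S12: "spans_set sp n B1 B2" and S21: "spans_set sp n B2 B1"
  shows "B1 = B2"
proof -
  let ?S = "\<lambda>x::nat\<Rightarrow>nat. {i. i < n \<and> x i = 1}"
  have sub1: "B1 \<subseteq> binvecs n" and sub2: "B2 \<subseteq> binvecs n"
    using B1 B2 unfolding is_base_def by blast+
  have step: "x \<in> P2"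
    if IH: "\<And>c. card (?S c) < card (?S x) \<Longrightarrow> (c \<in> P2 \<longrightarrow> c \<in> P1)"
      and P1: "is_base sp n m A P1" and P2: "is_base sp n m A P2"
      and S: "spans_set sp n P2 P1" and x: "x \<in> P1" for P1 P2 x
  proof (rule ccontr)
    assume nx: "x \<notin> P2"
    have s1: "P1 \<subseteq> binvecs n" and s2: "P2 \<subseteq> binvecs n" using P1 P2 unfolding is_base_def by blast+
    have spx: "sp n P2 x" using S x unfolding spans_set_def by blast
    have xb0: "x \<in> binvecs n" using s1 x by blast
    obtain C where C: "C \<subseteq> P2" "\<forall>c\<in>C. \<forall>i<n. c i \<le> x i" "sp n C x"
      using H1[OF spx s2 xb0] by blast
    have "C \<subseteq> P1 - {x}"
    proof
      fix c assume c: "c \<in> C"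
      have cb: "c \<in> binvecs n" using c C s2 by auto
      have xb: "x \<in> binvecs n" using x s1 by auto
      have "c \<noteq> x" using c C(1) nx by blast
      then have "\<exists>i. c i \<noteq> x i" by (simp add: fun_eq_iff)
      then obtain i where i: "c i \<noteq> x i" by blast
      have "i < n"
      proof (rule ccontr)
        assume "\<not> i < n"
        then have "i \<ge> n" by simp
        then have "c i = 0" "x i = 0" using cb xb unfolding binvecs_def by blast+
        then show False using i by simp
      qed
      then have le: "c i \<le> x i" "c i \<in> {0,1}" "x i \<in> {0,1}"
        using C(2) c cb xb unfolding binvecs_def by blast+
      then have ci: "c i = 0" "x i = 1" using i by auto
      have sub: "?S c \<subseteq> ?S x"
      proof
        fix j assume j: "j \<in> ?S c"
        then have jn: "j < n" and cj: "c j = 1" by simp_all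
        have "x j \<in> {0,1}" using xb jn unfolding binvecs_def by blast
        moreover have "c j \<le> x j" using C(2) c jn by blast
        ultimately have "x j = 1" using cj by auto
        then show "j \<in> ?S x" using jn by simp
      qed
      have "i \<in> ?S x" using ci \<open>i < n\<close> by simp
      moreover have "i \<notin> ?S c" using ci by simp
      ultimately have "?S c \<subset> ?S x" using sub by blast
      moreover have "finite (?S x)" by simp
      ultimately have "card (?S c) < card (?S x)" using psubset_card_mono by blast
      then have "c \<in> P2 \<longrightarrow> c \<in> P1" by (rule IH)
      then show "c \<in> P1 - {x}" using c C(1) \<open>c \<noteq> x\<close> by blast
    qed
    then have "sp n (P1 - {x}) x" by (rule H3[OF C(3)])
    then show False by (rule H2[OF P1 x])
  qed
  have main: "\<forall>x. card (?S x) = k \<longrightarrow> (x \<in> B1 \<longrightarrow> x \<in> B2) \<and> (x \<in> B2 \<longrightarrow> x \<in> B1)" for k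
  proof (induction k rule: less_induct)
    case (less k)
    show ?case
    proof (intro allI impI conjI)
      fix x assume k: "card (?S x) = k"
      have IH: "\<And>c. card (?S c) < card (?S x) \<Longrightarrow> (c \<in> B1 \<longrightarrow> c \<in> B2) \<and> (c \<in> B2 \<longrightarrow> c \<in> B1)"
        using less k by blast
      { assume "x \<in> B1" then show "x \<in> B2" using step[OF _ B1 B2 S21] IH by blast }
      { assume "x \<in> B2" then show "x \<in> B1" using step[OF _ B2 B1 S12] IH by blast }
    qed
  qed
  show ?thesis
  proof (rule set_eqI)
    fix x
    have "(x \<in> B1 \<longrightarrow> x \<in> B2) \<and> (x \<in> B2 \<longrightarrow> x \<in> B1)"
      using main[of "card (?S x)"] by blast
    then show "x \<in> B1 \<longleftrightarrow> x \<in> B2" by blast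
  qed
qed


lemma fin_sub: "X \<subseteq> binvecs n \<Longrightarrow> finite X"
  using finite_binvecs finite_subset by blast

lemma bin_H1:
  assumes "bin_spans_vec n X y" "X \<subseteq> binvecs n"
  shows "\<exists>C\<subseteq>X. (\<forall>c\<in>C. \<forall>i<n. c i \<le> y i) \<and> bin_spans_vec n C y"
proof -
  obtain C where C: "C \<subseteq> X" "\<forall>i<n. y i = (\<Sum>x\<in>C. x i)"
    using assms(1) by (auto simp: bin_spans_vec_def)
  have fC: "finite C" using C(1) assms(2) fin_sub by blast
  have "\<forall>c\<in>C. \<forall>i<n. c i \<le> y i"
    using C(2) fC by (auto intro: member_le_sum)
  moreover have "bin_spans_vec n C y" using C(2) by (auto simp: bin_spans_vec_def)
  ultimately show ?thesis using C(1) by blast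
qed

lemma bool_H1:
  assumes "bool_spans_vec n X y" "X \<subseteq> binvecs n"
  shows "\<exists>C\<subseteq>X. (\<forall>c\<in>C. \<forall>i<n. c i \<le> y i) \<and> bool_spans_vec n C y"
proof -
  obtain C where C: "C \<subseteq> X" "\<forall>i<n. y i = (if \<exists>x\<in>C. x i = 1 then 1 else 0)"
    using assms(1) by (auto simp: bool_spans_vec_def)
  have "\<forall>c\<in>C. \<forall>i<n. c i \<le> y i"
  proof (intro ballI allI impI)
    fix c i assume c: "c \<in> C" and i: "i < n"
    have "c i \<in> {0,1}" using c C(1) assms(2) i by (auto simp: binvecs_def)
    then show "c i \<le> y i" using C(2) c i by auto
  qed
  moreover have "bool_spans_vec n C y" using C(2) by (auto simp: bool_spans_vec_def)
  ultimately show ?thesis using C(1) by blast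
qed

lemma bin_H3: "bin_spans_vec n X y \<Longrightarrow> X \<subseteq> Y \<Longrightarrow> bin_spans_vec n Y y"
  unfolding bin_spans_vec_def by blast

lemma bool_H3: "bool_spans_vec n X y \<Longrightarrow> X \<subseteq> Y \<Longrightarrow> bool_spans_vec n Y y"
  unfolding bool_spans_vec_def by blast

lemma base_drop:
  assumes B: "is_base sp n m A B" and x: "x \<in> B"
    and sp: "spans_set sp n (B - {x}) (columns n m A)"
  shows False
proof -
  have sub: "B \<subseteq> binvecs n" using B by (auto simp: is_base_def)
  then have "finite B" using fin_sub by blast
  then have "card (B - {x}) < card B" using x by (rule card_Diff1_less)
  moreover have "B - {x} \<subseteq> binvecs n" using sub by blast
  then have "card B \<le> card (B - {x})" using B sp unfolding is_base_def by blast
  ultimately show False by simp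
qed

lemma col_bin:
  assumes "binary_matrix n m A" "y \<in> columns n m A" "i < n"
  shows "y i \<le> 1"
proof -
  obtain j where j: "j < m" "y = col n A j" using assms(2) by (auto simp: columns_def)
  then have "y i = A i j" using assms(3) by (simp add: col_def)
  moreover have "A i j \<in> {0,1}" using assms(1,3) j(1) by (simp add: binary_matrix_def)
  ultimately show ?thesis by auto
qed

lemma bin_H2:
  assumes bm: "binary_matrix n m A" and B: "is_base bin_spans_vec n m A B" and x: "x \<in> B"
    and spx: "bin_spans_vec n (B - {x}) x"
  shows False
proof -
  have sub: "B \<subseteq> binvecs n" using B by (auto simp: is_base_def)
  obtain C where C: "C \<subseteq> B - {x}" "\<forall>i<n. x i = (\<Sum>c\<in>C. c i)"
    using spx by (auto simp: bin_spans_vec_def)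
  have fC: "finite C" using C(1) sub fin_sub by blast
  have Cle: "\<forall>c\<in>C. \<forall>i<n. c i \<le> x i" using C(2) fC by (auto intro: member_le_sum)
  have "spans_set bin_spans_vec n (B - {x}) (columns n m A)"
    unfolding spans_set_def
  proof
    fix y assume y: "y \<in> columns n m A"
    have "bin_spans_vec n B y" using B y by (auto simp: is_base_def spans_set_def)
    then obtain D where D: "D \<subseteq> B" "\<forall>i<n. y i = (\<Sum>d\<in>D. d i)"
      by (auto simp: bin_spans_vec_def)
    have fD: "finite D" using D(1) sub fin_sub by blast
    show "bin_spans_vec n (B - {x}) y"
    proof (cases "x \<in> D")
      case False
      then show ?thesis using D unfolding bin_spans_vec_def by blast
    next
      case True
      let ?D = "D - {x}"
      have zero: "e i = 0" if e: "e \<in> ?D \<inter> C" and i: "i < n" for e i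
      proof -
        have "e i + x i = (\<Sum>d\<in>{e,x}. d i)" using e by auto
        also have "\<dots> \<le> (\<Sum>d\<in>D. d i)" using e True fD by (intro sum_mono2) auto
        also have "\<dots> \<le> 1" using D(2) col_bin[OF bm y i] i by simp
        finally have "e i + x i \<le> 1" .
        moreover have "e i \<le> x i" using Cle e i by auto
        ultimately show ?thesis by simp
      qed
      have "\<forall>i<n. y i = (\<Sum>d\<in>?D \<union> C. d i)"
      proof (intro allI impI)
        fix i assume i: "i < n"
        have "(\<Sum>d\<in>?D \<union> C. d i) + (\<Sum>d\<in>?D \<inter> C. d i) = (\<Sum>d\<in>?D. d i) + (\<Sum>d\<in>C. d i)"
          using fD fC by (intro sum.union_inter) auto
        moreover have "(\<Sum>d\<in>?D \<inter> C. d i) = 0" using zero i by (intro sum.neutral) blast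
        moreover have "(\<Sum>d\<in>D. d i) = x i + (\<Sum>d\<in>?D. d i)"
          using True fD by (simp add: sum.remove)
        ultimately show "y i = (\<Sum>d\<in>?D \<union> C. d i)" using D(2) C(2) i by simp
      qed
      moreover have "?D \<union> C \<subseteq> B - {x}" using D(1) C(1) by auto
      ultimately show ?thesis unfolding bin_spans_vec_def by blast
    qed
  qed
  then show False using base_drop[OF B x] by blast
qed

lemma bool_H2:
  assumes B: "is_base bool_spans_vec n m A B" and x: "x \<in> B"
    and spx: "bool_spans_vec n (B - {x}) x"
  shows False
proof -
  have sub: "B \<subseteq> binvecs n" using B by (auto simp: is_base_def)
  obtain C where C: "C \<subseteq> B - {x}" "\<forall>i<n. x i = (if \<exists>c\<in>C. c i = 1 then 1 else 0)"
    using spx by (auto simp: bool_spans_vec_def)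
  have "spans_set bool_spans_vec n (B - {x}) (columns n m A)"
    unfolding spans_set_def
  proof
    fix y assume y: "y \<in> columns n m A"
    have "bool_spans_vec n B y" using B y by (auto simp: is_base_def spans_set_def)
    then obtain D where D: "D \<subseteq> B" "\<forall>i<n. y i = (if \<exists>d\<in>D. d i = 1 then 1 else 0)"
      by (auto simp: bool_spans_vec_def)
    show "bool_spans_vec n (B - {x}) y"
    proof (cases "x \<in> D")
      case False
      then show ?thesis using D unfolding bool_spans_vec_def by blast
    next
      case True
      let ?D = "D - {x}"
      have "\<forall>i<n. y i = (if \<exists>d\<in>?D \<union> C. d i = 1 then 1 else 0)"
      proof (intro allI impI)
        fix i assume i: "i < n"
        have "(\<exists>d\<in>?D \<union> C. d i = 1) = (\<exists>d\<in>D. d i = 1)"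
        proof
          assume "\<exists>d\<in>?D \<union> C. d i = 1"
          then obtain d where d: "d \<in> ?D \<union> C" "d i = 1" by blast
          show "\<exists>d\<in>D. d i = 1"
          proof (cases "d \<in> C")
            case True
            then have "x i = 1" using C(2) i d by auto
            then show ?thesis using \<open>x \<in> D\<close> by blast
          next
            case False then show ?thesis using d by blast
          qed
        next
          assume "\<exists>d\<in>D. d i = 1"
          then obtain d where d: "d \<in> D" "d i = 1" by blast
          show "\<exists>d\<in>?D \<union> C. d i = 1"
          proof (cases "d = x")
            case True
            then have "\<exists>c\<in>C. c i = 1" using C(2) i d by (metis zero_neq_one)
            then show ?thesis by blast
          next
            case False then show ?thesis using d by blast
          qed
        qed
        then show "y i = (if \<exists>d\<in>?D \<union> C. d i = 1 then 1 else 0)" using D(2) i by simp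
      qed
      moreover have "?D \<union> C \<subseteq> B - {x}" using D(1) C(1) by auto
      ultimately show ?thesis unfolding bool_spans_vec_def by blast
    qed
  qed
  then show False using base_drop[OF B x] by blast
qed

theorem mainTheorem15:
  fixes n m :: nat and A :: "nat \<Rightarrow> nat \<Rightarrow> nat"
  assumes "binary_matrix n m A"
  shows "(\<forall>B1 B2. is_base bin_spans_vec n m A B1 \<and> is_base bin_spans_vec n m A B2 \<and>
            (\<forall>B. is_base bin_spans_vec n m A B \<longrightarrow> spans_set bin_spans_vec n B1 B) \<and>
            (\<forall>B. is_base bin_spans_vec n m A B \<longrightarrow> spans_set bin_spans_vec n B2 B)
            \<longrightarrow> B1 = B2)
       \<and> (\<forall>B1 B2. is_base bool_spans_vec n m A B1 \<and> is_base bool_spans_vec n m A B2 \<and>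
            (\<forall>B. is_base bool_spans_vec n m A B \<longrightarrow> spans_set bool_spans_vec n B1 B) \<and>
            (\<forall>B. is_base bool_spans_vec n m A B \<longrightarrow> spans_set bool_spans_vec n B2 B)
            \<longrightarrow> B1 = B2)"
proof (intro conjI allI impI)
  fix B1 B2
  assume h: "is_base bin_spans_vec n m A B1 \<and> is_base bin_spans_vec n m A B2 \<and>
            (\<forall>B. is_base bin_spans_vec n m A B \<longrightarrow> spans_set bin_spans_vec n B1 B) \<and>
            (\<forall>B. is_base bin_spans_vec n m A B \<longrightarrow> spans_set bin_spans_vec n B2 B)"
  show "B1 = B2"
    apply (rule generic[where sp = bin_spans_vec and n = n and m = m and A = A])
    apply (erule bin_H1, assumption)
    apply (erule (2) bin_H2[OF assms])
    apply (erule (1) bin_H3)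
    using h by blast+
next
  fix B1 B2
  assume h: "is_base bool_spans_vec n m A B1 \<and> is_base bool_spans_vec n m A B2 \<and>
            (\<forall>B. is_base bool_spans_vec n m A B \<longrightarrow> spans_set bool_spans_vec n B1 B) \<and>
            (\<forall>B. is_base bool_spans_vec n m A B \<longrightarrow> spans_set bool_spans_vec n B2 B)"
  show "B1 = B2"
    apply (rule generic[where sp = bool_spans_vec and n = n and m = m and A = A])
    apply (erule bool_H1, assumption)
    apply (erule (2) bool_H2)
    apply (erule (1) bool_H3)
    using h by blast+
qed

end
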